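(* Let $q$ be a prime power, $N=q^2-1$, $\alpha\in\mathbb{F}_{q^2}$ with $\mathbb{F}_{q^2}=\mathbb{F}_q(\alpha)$, $g$ a primitive root of $\mathbb{F}_{q^2}$, and $M=\{\log_g(t-\alpha):t\in\mathbb{F}_q\}$ (so $0\notin M$ and $|M|=q$). Let $$\Phi=\frac{1}{\sqrt{q+1}}\mathcal{F}^{(N)}_{M\cup\{0\}}\in\mathbb{C}^{(q+1)\times(q^2-1)},$$ with columns $\Phi_0,\dots,\Phi_{N-1}$, and for $j=0,\dots,q-2$ let $T_j=\{j+k(q-1):0\le k\le q\}$. Then: (1) for each $0\le j\le q-2$, the $(q+1)\times(q+1)$ submatrix $\Phi_{T_j}$ (columns indexed by $T_j$) is unitary, i.e. its columns form an orthonormal basis of $\mathbb{C}^{q+1}$; (2) for $k_1\in T_{j_1}$, $k_2\in T_{j_2}$ with $j_1\neq j_2$, $$\frac{\sqrt q-1}{q+1}\le|\langle\Phi_{k_1},\Phi_{k_2}\rangle|\le\frac{\sqrt q+1}{q+1}.$$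
   Context: $\log_g u$ for $u\in\mathbb{F}_{q^2}^*$ is the unique integer $m$ with $0\le m<q^2-1$ and $g^m=u$. $\mathcal{F}^{(N)}$ is the $N\times N$ Fourier matrix with $(k,j)$ entry $e^{2\pi i kj/N}$, $0\le k,j\le N-1$; for $M'\subset\{0,\dots,N-1\}$, $\mathcal{F}^{(N)}_{M'}$ is the submatrix of rows with indices in $M'$. $\langle u,v\rangle=\sum_r u_r\overline{v_r}$. *)

theory Defs
  imports Complex_Main "HOL-Computational_Algebra.Primes"
begin

definition is_subfield :: "'a::field set \<Rightarrow> bool" where
  "is_subfield K \<longleftrightarrow> 0 \<in> K \<and> 1 \<in> K \<and> (\<forall>x\<in>K. \<forall>y\<in>K. x + y \<in> K \<and> x * y \<in> K)
     \<and> (\<forall>x\<in>K. - x \<in> K) \<and> (\<forall>x\<in>K. x \<noteq> 0 \<longrightarrow> inverse x \<in> K)"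

definition adjoin :: "'a::field set \<Rightarrow> 'a \<Rightarrow> 'a set" where
  "adjoin K a = \<Inter>{L. is_subfield L \<and> K \<subseteq> L \<and> a \<in> L}"

definition primitive_root :: "'a::{field,finite} \<Rightarrow> bool" where
  "primitive_root g \<longleftrightarrow> g \<noteq> 0 \<and> (\<forall>u. u \<noteq> 0 \<longrightarrow> (\<exists>m::nat. g ^ m = u))"

definition dlog :: "'a::{field,finite} \<Rightarrow> 'a \<Rightarrow> nat" where
  "dlog g u = (THE m. m < card (UNIV :: 'a set) - 1 \<and> g ^ m = u)"

definition fourier :: "nat \<Rightarrow> nat \<Rightarrow> nat \<Rightarrow> complex" where
  "fourier N k j = exp (2 * of_real pi * \<i> * of_nat (k * j) / of_nat N)"

definition cinner :: "nat set \<Rightarrow> (nat \<Rightarrow> complex) \<Rightarrow> (nat \<Rightarrow> complex) \<Rightarrow> complex" where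
  "cinner R u v = (\<Sum>r\<in>R. u r * cnj (v r))"

end

theory Submission
  imports Defs "HOL-Library.Real_Mod"
begin

lemma power_card_closed:
  fixes u :: "'a::field"
  assumes "finite A" "0 \<notin> A" "u \<noteq> 0" "\<And>x. x \<in> A \<Longrightarrow> u * x \<in> A"
  shows "u ^ card A = 1"
proof -
  have inj: "inj_on (\<lambda>x. u * x) A" using assms(3) by (auto simp: inj_on_def)
  have img: "(\<lambda>x. u * x) ` A = A"
    using inj assms by (intro card_subset_eq) (auto simp: card_image)
  have "prod id A = prod id ((\<lambda>x. u * x) ` A)" using img by simp
  also have "\<dots> = prod (\<lambda>x. u * x) A" using inj by (simp add: prod.reindex)
  also have "\<dots> = u ^ card A * prod id A" by (simp add: prod.distrib)
  finally have "u ^ card A * prod id A = 1 * prod id A" by simp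
  moreover have "prod id A \<noteq> 0" using assms(1,2) by (auto simp: prod_zero_iff)
  ultimately show ?thesis by simp
qed

lemma fermat_field:
  fixes u :: "'a::{field,finite}"
  assumes "u \<noteq> 0" shows "u ^ (card (UNIV::'a set) - 1) = 1"
proof -
  have "u ^ card (UNIV - {0::'a}) = 1"
    by (rule power_card_closed) (use assms in auto)
  thus ?thesis by (simp add: card_Diff_singleton)
qed

lemma subfield_facts:
  assumes "is_subfield K"
  shows "0 \<in> K" "1 \<in> K" "x \<in> K \<Longrightarrow> y \<in> K \<Longrightarrow> x + y \<in> K"
    "x \<in> K \<Longrightarrow> y \<in> K \<Longrightarrow> x * y \<in> K" "x \<in> K \<Longrightarrow> -x \<in> K"
    "x \<in> K \<Longrightarrow> inverse x \<in> K"
    "x \<in> K \<Longrightarrow> y \<in> K \<Longrightarrow> x - y \<in> K"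
    "x \<in> K \<Longrightarrow> y \<in> K \<Longrightarrow> x / y \<in> K"
  using assms unfolding is_subfield_def
  by (metis inverse_zero, metis, metis, metis, metis, metis inverse_zero,
      metis diff_conv_add_uminus, metis divide_inverse inverse_zero)

lemma fermat_subfield:
  fixes u :: "'a::{field,finite}"
  assumes "is_subfield K" "u \<in> K" "u \<noteq> 0" shows "u ^ (card K - 1) = 1"
proof -
  have "u ^ card (K - {0}) = 1"
    by (rule power_card_closed) (use assms subfield_facts[OF assms(1)] in auto)
  thus ?thesis using subfield_facts(1)[OF assms(1)] by (simp add: card_Diff_singleton)
qed

lemma primroot_pow_eq:
  fixes g :: "'a::{field,finite}"
  assumes "primitive_root g" "N = card (UNIV::'a set) - 1"
  shows "g ^ a = g ^ b \<longleftrightarrow> a mod N = b mod N"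
proof -
  have g0: "g \<noteq> 0" using assms unfolding primitive_root_def by auto
  have gN: "g ^ N = 1" using fermat_field[OF g0] assms by simp
  have red: "g ^ a = g ^ (a mod N)" for a
  proof -
    have "g ^ a = g ^ (N * (a div N) + a mod N)" by simp
    also have "\<dots> = (g ^ N) ^ (a div N) * g ^ (a mod N)" by (simp only: power_add power_mult)
    finally have "g ^ a = (g ^ N) ^ (a div N) * g ^ (a mod N)" .
    thus ?thesis using gN by simp
  qed
  have inj: "a = b" if "a < N" "b < N" "g ^ a = g ^ b" "a \<le> b" for a b
  proof (rule ccontr)
    assume "a \<noteq> b"
    define e where "e = b - a"
    have e: "0 < e" "e < N" using that \<open>a \<noteq> b\<close> by (auto simp: e_def)
    have ae: "a + e = b" using that by (simp add: e_def)
    have "g ^ a * g ^ e = g ^ b" unfolding ae[symmetric] by (simp only: power_add)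
    hence "g ^ a * g ^ e = g ^ a * 1" using that by simp
    hence ge: "g ^ e = 1" using g0 by simp
    have red2: "g ^ m = g ^ (m mod e)" for m
    proof -
      have "g ^ m = g ^ (e * (m div e) + m mod e)" by simp
      also have "\<dots> = (g ^ e) ^ (m div e) * g ^ (m mod e)" by (simp only: power_add power_mult)
      finally have "g ^ m = (g ^ e) ^ (m div e) * g ^ (m mod e)" .
      thus ?thesis using ge by simp
    qed
    have "UNIV - {0} \<subseteq> (\<lambda>m. g ^ m) ` {..<e}"
    proof
      fix u :: 'a assume "u \<in> UNIV - {0}"
      then obtain m :: nat where "g ^ m = u" using assms(1) unfolding primitive_root_def by auto
      thus "u \<in> (\<lambda>m. g ^ m) ` {..<e}" using red2[of m] e by (intro image_eqI[of _ _ "m mod e"]) auto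
    qed
    hence "card (UNIV - {0::'a}) \<le> card ((\<lambda>m. g ^ m) ` {..<e})" by (intro card_mono) auto
    also have "\<dots> \<le> e" using card_image_le[of "{..<e}" "\<lambda>m. g ^ m"] by simp
    finally show False using e assms(2) by (simp add: card_Diff_singleton)
  qed
  show ?thesis
  proof
    assume "g ^ a = g ^ b"
    hence h: "g ^ (a mod N) = g ^ (b mod N)" using red by metis
    have "card {0::'a, 1} \<le> card (UNIV::'a set)" by (intro card_mono) auto
    hence Npos: "N > 0" using assms(2) by simp
    show "a mod N = b mod N"
      using inj[of "a mod N" "b mod N"] inj[of "b mod N" "a mod N"] h Npos
      by (metis mod_less_divisor nat_le_linear)
  next
    assume "a mod N = b mod N" thus "g ^ a = g ^ b" using red by metis
  qed
qed


lemma dlog_props: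
  fixes g :: "'a::{field,finite}"
  assumes "primitive_root g" "u \<noteq> 0"
  shows "dlog g u < card (UNIV::'a set) - 1" "g ^ dlog g u = u"
proof -
  define N where "N = card (UNIV::'a set) - 1"
  have "card {0::'a, 1} \<le> card (UNIV::'a set)" by (intro card_mono) auto
  hence Npos: "N > 0" by (simp add: N_def)
  obtain m :: nat where m: "g ^ m = u" using assms unfolding primitive_root_def by auto
  have ex: "\<exists>!k. k < N \<and> g ^ k = u"
  proof
    show "m mod N < N \<and> g ^ (m mod N) = u"
      using Npos m primroot_pow_eq[OF assms(1) N_def, of "m mod N" m] by simp
  next
    fix k assume "k < N \<and> g ^ k = u"
    thus "k = m mod N" using m primroot_pow_eq[OF assms(1) N_def, of k m] by simp
  qed
  have "dlog g u < N \<and> g ^ dlog g u = u"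
    unfolding dlog_def N_def[symmetric] by (rule theI'[OF ex])
  thus "dlog g u < card (UNIV::'a set) - 1" "g ^ dlog g u = u" by (auto simp: N_def)
qed

lemma dlog_pow:
  fixes g :: "'a::{field,finite}"
  assumes "primitive_root g"
  shows "dlog g (g ^ m) = m mod (card (UNIV::'a set) - 1)"
proof -
  have g0: "g \<noteq> 0" using assms unfolding primitive_root_def by auto
  have "dlog g (g ^ m) mod (card (UNIV::'a set) - 1) = m mod (card (UNIV::'a set) - 1)"
    using dlog_props[OF assms, of "g^m"] g0 primroot_pow_eq[OF assms refl] by simp
  thus ?thesis using dlog_props(1)[OF assms, of "g^m"] g0 by simp
qed

lemma dlog_mult:
  fixes g :: "'a::{field,finite}"
  assumes "primitive_root g" "u \<noteq> 0" "v \<noteq> 0"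
  shows "dlog g (u * v) mod (card (UNIV::'a set) - 1) = (dlog g u + dlog g v) mod (card (UNIV::'a set) - 1)"
proof -
  have "g ^ dlog g (u * v) = g ^ (dlog g u + dlog g v)"
    using dlog_props(2)[OF assms(1)] assms by (simp add: power_add)
  thus ?thesis using primroot_pow_eq[OF assms(1) refl] by blast
qed

definition chr :: "'a::{field,finite} \<Rightarrow> int \<Rightarrow> 'a \<Rightarrow> complex" where
  "chr g D u = cis (2 * pi * of_int (int (dlog g u) * D) / real (card (UNIV::'a set) - 1))"

lemma cis_period:
  assumes "n mod N = m mod (N::nat)" "N > 0"
  shows "cis (2 * pi * of_int (int n * D) / real N) = cis (2 * pi * of_int (int m * D) / real N)"
proof -
  have "int n mod int N = int m mod int N" using assms by (metis of_nat_mod)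
  then obtain z where z: "int n = int m + int N * z"
    by (metis mod_eqE mult.commute add.commute diff_add_cancel) 
  have "2 * pi * of_int (int n * D) / real N = 2 * pi * of_int (int m * D) / real N + 2 * pi * of_int (z * D)"
    using assms(2) by (simp add: z field_simps)
  also have "cis \<dots> = cis (2 * pi * of_int (int m * D) / real N) * cis (2 * pi * of_int (z * D))"
    by (simp only: cis_mult)
  also have "cis (2 * pi * of_int (z * D)) = 1" by (rule cis_multiple_2pi) simp
  finally show ?thesis by simp
qed

lemma Ncard_pos: "card (UNIV::'a::{field,finite} set) - 1 > 0"
proof -
  have "card {0::'a, 1} \<le> card (UNIV::'a set)" by (intro card_mono) auto
  thus ?thesis by simp
qed

lemma chr_mult:
  fixes g :: "'a::{field,finite}"
  assumes "primitive_root g" "u \<noteq> 0" "v \<noteq> 0"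
  shows "chr g D (u * v) = chr g D u * chr g D v"
proof -
  let ?N = "card (UNIV::'a set) - 1"
  have "chr g D (u * v) = cis (2 * pi * of_int (int (dlog g u + dlog g v) * D) / real ?N)"
    unfolding chr_def by (rule cis_period[OF dlog_mult[OF assms] Ncard_pos])
  also have "\<dots> = chr g D u * chr g D v"
    unfolding chr_def cis_mult
    by (intro arg_cong[where f=cis]) (simp add: distrib_left distrib_right add_divide_distrib)
  finally show ?thesis .
qed

lemma chr_one:
  fixes g :: "'a::{field,finite}"
  assumes "primitive_root g" shows "chr g D 1 = 1"
  using dlog_pow[OF assms, of 0] Ncard_pos[where 'a='a] by (simp add: chr_def)

lemma chr_cnj:
  fixes g :: "'a::{field,finite}"
  assumes "primitive_root g" "u \<noteq> 0"
  shows "cnj (chr g D u) = chr g D (inverse u)"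
proof -
  have "chr g D u * chr g D (inverse u) = 1"
    using chr_mult[OF assms(1) assms(2), of "inverse u" D] assms chr_one[OF assms(1)] by simp
  moreover have "cnj (chr g D u) * chr g D u = 1"
    unfolding chr_def cis_cnj cis_mult by simp
  ultimately show ?thesis by (metis mult.commute mult.left_neutral mult.assoc)
qed

lemma norm_chr [simp]: "norm (chr g D u) = 1" by (simp add: chr_def)

lemma sum_chr_zero:
  fixes g :: "'a::{field,finite}"
  assumes "primitive_root g" "finite A" "0 \<notin> A" "v \<noteq> 0" "\<And>x. x \<in> A \<Longrightarrow> v * x \<in> A"
    "chr g D v \<noteq> 1"
  shows "(\<Sum>x\<in>A. chr g D x) = 0"
proof -
  have inj: "inj_on (\<lambda>x. v * x) A" using assms(4) by (auto simp: inj_on_def)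
  have img: "(\<lambda>x. v * x) ` A = A"
    using inj assms by (intro card_subset_eq) (auto simp: card_image)
  have "(\<Sum>x\<in>A. chr g D x) = (\<Sum>x\<in>(\<lambda>x. v * x) ` A. chr g D x)" using img by simp
  also have "\<dots> = (\<Sum>x\<in>A. chr g D (v * x))" using inj by (simp add: sum.reindex)
  also have "\<dots> = chr g D v * (\<Sum>x\<in>A. chr g D x)"
    unfolding sum_distrib_left using assms(3,4) 
    by (intro sum.cong refl chr_mult[OF assms(1)]) auto
  finally have "(chr g D v - 1) * (\<Sum>x\<in>A. chr g D x) = 0" by (simp add: algebra_simps)
  thus ?thesis using assms(6) by simp
qed


lemma lin_indep:
  fixes \<alpha> :: "'a::field"
  assumes "is_subfield K" "\<alpha> \<notin> K" "a \<in> K" "b \<in> K" "a * \<alpha> = b"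
  shows "a = 0"
proof (rule ccontr)
  assume "a \<noteq> 0"
  hence "\<alpha> = b / a" using assms(5) by (simp add: field_simps)
  thus False using assms subfield_facts(8)[OF assms(1)] by auto
qed

lemma sum_bij1:
  fixes \<alpha> :: "'a::{field,finite}" and f :: "'a \<Rightarrow> complex"
  assumes K: "is_subfield K" "\<alpha> \<notin> K" "card K = q" "card (UNIV::'a set) = q^2"
  shows "(\<Sum>u\<in>UNIV - K. f u) = (\<Sum>c\<in>K - {0}. \<Sum>t\<in>K. f (c * (t - \<alpha>)))"
proof -
  note sf = subfield_facts[OF K(1)]
  let ?h = "\<lambda>(c, t). c * (t - \<alpha>)"
  have inj: "inj_on ?h ((K - {0}) \<times> K)"
  proof (rule inj_onI)
    fix x y assume x: "x \<in> (K - {0}) \<times> K" and y: "y \<in> (K - {0}) \<times> K" and xy: "?h x = ?h y"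
    obtain c t c' t' where xyd: "x = (c, t)" "y = (c', t')" by (cases x, cases y) auto
    have h: "c \<in> K" "c \<noteq> 0" "t \<in> K" "c' \<in> K" "c' \<noteq> 0" "t' \<in> K" using x y xyd by auto
    have e: "c * (t - \<alpha>) = c' * (t' - \<alpha>)" using xy xyd by simp
    have "(c' - c) * \<alpha> = c' * t' - c * t" using e by (simp add: algebra_simps)
    hence "c' - c = 0" using h sf by (intro lin_indep[OF K(1,2)]) auto
    hence "c = c'" by simp
    with e h have "c = c' \<and> t = t'" by simp
    thus "x = y" using xyd by simp
  qed
  have sub: "?h ` ((K - {0}) \<times> K) \<subseteq> UNIV - K"
  proof
    fix u assume "u \<in> ?h ` ((K - {0}) \<times> K)"
    then obtain c t where ct: "c \<in> K" "c \<noteq> 0" "t \<in> K" "u = c * (t - \<alpha>)" by auto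
    have "u \<notin> K"
    proof
      assume "u \<in> K"
      hence h: "c \<in> K" "c \<noteq> 0" "t \<in> K" "c * (t - \<alpha>) \<in> K" using ct by auto
    have "t - \<alpha> = (c * (t - \<alpha>)) / c" using h by simp
    hence "t - \<alpha> \<in> K" using h sf by metis
    hence "t - (t - \<alpha>) \<in> K" using h sf by metis
    thus False using K(2) by simp
  qed
    thus "u \<in> UNIV - K" by simp
  qed
  have "card (?h ` ((K - {0}) \<times> K)) = (q - 1) * q"
    using inj K sf by (simp add: card_image card_cartesian_product card_Diff_singleton)
  also have "\<dots> = card (UNIV - K)" using K by (simp add: card_Diff_subset power2_eq_square algebra_simps diff_mult_distrib)
  finally have img: "?h ` ((K - {0}) \<times> K) = UNIV - K" using sub by (intro card_subset_eq) auto
  have "(\<Sum>u\<in>UNIV - K. f u) = (\<Sum>p\<in>(K - {0}) \<times> K. f (?h p))"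
    unfolding img[symmetric] using inj by (simp add: sum.reindex)
  also have "\<dots> = (\<Sum>c\<in>K - {0}. \<Sum>t\<in>K. f (c * (t - \<alpha>)))"
    unfolding sum.cartesian_product by (intro sum.cong refl) (auto split: prod.splits)
  finally show ?thesis .
qed

lemma sum_bij2:
  fixes \<alpha> :: "'a::{field,finite}" and f :: "'a \<Rightarrow> complex"
  assumes K: "is_subfield K" "\<alpha> \<notin> K" "card K = q" "card (UNIV::'a set) = q^2"
  shows "(\<Sum>u\<in>UNIV - K. f u) = (\<Sum>p\<in>{p\<in>K \<times> K. fst p \<noteq> snd p}. f ((fst p - \<alpha>) / (snd p - \<alpha>)))"
proof -
  note sf = subfield_facts[OF K(1)]
  let ?P = "{p\<in>K \<times> K. fst p \<noteq> snd p}"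
  let ?h = "\<lambda>p. (fst p - \<alpha>) / (snd p - \<alpha>)"
  have nz: "t - \<alpha> \<noteq> 0" if "t \<in> K" for t using that K(2) by auto
  have inj: "inj_on ?h ?P"
  proof (rule inj_onI)
    fix x y assume x: "x \<in> ?P" and y: "y \<in> ?P" and xy: "?h x = ?h y"
    obtain s t s' t' where xyd: "x = (s, t)" "y = (s', t')" by (cases x, cases y) auto
    have h: "s \<in> K" "t \<in> K" "s \<noteq> t" "s' \<in> K" "t' \<in> K" "s' \<noteq> t'" using x y xyd by auto
    have e: "(s - \<alpha>) / (t - \<alpha>) = (s' - \<alpha>) / (t' - \<alpha>)" using xy xyd by simp
    have e2: "(s - \<alpha>) * (t' - \<alpha>) = (s' - \<alpha>) * (t - \<alpha>)"
      using e nz h by (simp add: field_simps)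
    have "(s' + t - s - t') * \<alpha> = s' * t - s * t'" using e2 by (simp add: algebra_simps)
    hence "s' + t - s - t' = 0" using h sf by (intro lin_indep[OF K(1,2)]) auto
    hence ss: "s = s' + t - t'" by (simp add: algebra_simps)
    have "(s - \<alpha>) * (t' - \<alpha>) - (s' - \<alpha>) * (t - \<alpha>) = (t - t') * (t' - s')"
      unfolding ss by (simp add: algebra_simps)
    hence "(t - t') * (t' - s') = 0" using e2 by simp
    hence "t = t'" using h by simp
    thus "x = y" using ss xyd by simp
  qed
  have sub: "?h ` ?P \<subseteq> UNIV - K"
  proof
    fix u assume "u \<in> ?h ` ?P"
    then obtain s t where st: "s \<in> K" "t \<in> K" "s \<noteq> t" "u = (s - \<alpha>) / (t - \<alpha>)" by auto
    have "u \<notin> K"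
    proof
      assume "u \<in> K"
      hence h: "s \<in> K" "t \<in> K" "s \<noteq> t" "(s - \<alpha>) / (t - \<alpha>) \<in> K" using st by auto
    define c where "c = (s - \<alpha>) / (t - \<alpha>)"
    have "s - \<alpha> = c * (t - \<alpha>)" using nz h by (simp add: c_def)
    hence "(c - 1) * \<alpha> = c * t - s" by (simp add: algebra_simps)
    moreover have cK: "c \<in> K" using h by (simp add: c_def)
    ultimately have "c - 1 = 0" using h sf by (intro lin_indep[OF K(1,2)]) auto
    hence "s - \<alpha> = t - \<alpha>" using \<open>s - \<alpha> = c * (t - \<alpha>)\<close> by simp
    thus False using h by simp
  qed
    thus "u \<in> UNIV - K" by simp
  qed
  have fin: "finite K" by simp
  have "?P = K \<times> K - (\<lambda>t. (t, t)) ` K" by auto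
  hence "card ?P = q * q - q" using K
    by (simp add: card_Diff_subset card_image inj_on_def card_cartesian_product subset_eq)
  hence "card (?h ` ?P) = q * q - q" using inj by (simp add: card_image)
  also have "\<dots> = card (UNIV - K)" using K by (simp add: card_Diff_subset power2_eq_square)
  finally have img: "?h ` ?P = UNIV - K" using sub by (intro card_subset_eq) auto
  show ?thesis
    unfolding img[symmetric] using inj by (simp add: sum.reindex)
qed


lemma S_trivial:
  fixes \<alpha> g :: "'a::{field,finite}"
  assumes K: "is_subfield K" "\<alpha> \<notin> K" "card K = q" "card (UNIV::'a set) = q^2"
    and g: "primitive_root g" and q: "q \<ge> 2"
    and triv: "\<And>c. c \<in> K \<Longrightarrow> c \<noteq> 0 \<Longrightarrow> chr g D c = 1"
    and v: "v \<noteq> 0" "chr g D v \<noteq> 1"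
  shows "(\<Sum>t\<in>K. chr g D (t - \<alpha>)) = -1"
proof -
  note sf = subfield_facts[OF K(1)]
  let ?S = "\<Sum>t\<in>K. chr g D (t - \<alpha>)"
  have nz: "t - \<alpha> \<noteq> 0" if "t \<in> K" for t using that K(2) by auto
  have "(\<Sum>u\<in>UNIV - K. chr g D u) = (\<Sum>c\<in>K - {0}. \<Sum>t\<in>K. chr g D (c * (t - \<alpha>)))"
    by (rule sum_bij1[OF K])
  also have "\<dots> = (\<Sum>c\<in>K - {0}. \<Sum>t\<in>K. chr g D (t - \<alpha>))"
    using nz by (intro sum.cong refl) (auto simp: chr_mult[OF g] triv)
  also have "\<dots> = of_nat (q - 1) * ?S" using K sf by (simp add: card_Diff_singleton)
  finally have e1: "(\<Sum>u\<in>UNIV - K. chr g D u) = of_nat (q - 1) * ?S" .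
  have e0: "(\<Sum>u\<in>UNIV - {0}. chr g D u) = 0"
    by (rule sum_chr_zero[OF g _ _ v(1) _ v(2)]) (use v in auto)
  have "UNIV - {0} = (UNIV - K) \<union> (K - {0})" using sf by auto
  hence "(\<Sum>u\<in>UNIV - {0}. chr g D u) = (\<Sum>u\<in>UNIV - K. chr g D u) + (\<Sum>u\<in>K - {0}. chr g D u)"
    by (simp add: sum.union_disjoint Diff_Int_distrib2)
  also have "(\<Sum>u\<in>K - {0}. chr g D u) = of_nat (q - 1)"
    using triv K sf by (simp add: card_Diff_singleton)
  finally have "of_nat (q - 1) * ?S = - of_nat (q - 1)" using e0 e1 by (simp add: eq_neg_iff_add_eq_0)
  moreover have "(of_nat (q - 1) :: complex) \<noteq> 0" using q by simp
  ultimately show ?thesis by (metis mult_minus_right mult_cancel_left mult.right_neutral)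
qed

lemma S_nontrivial:
  fixes \<alpha> g :: "'a::{field,finite}"
  assumes K: "is_subfield K" "\<alpha> \<notin> K" "card K = q" "card (UNIV::'a set) = q^2"
    and g: "primitive_root g"
    and v: "v \<in> K" "v \<noteq> 0" "chr g D v \<noteq> 1"
  shows "norm (\<Sum>t\<in>K. chr g D (t - \<alpha>)) = sqrt q"
proof -
  note sf = subfield_facts[OF K(1)]
  let ?S = "\<Sum>t\<in>K. chr g D (t - \<alpha>)"
  have nz: "t - \<alpha> \<noteq> 0" if "t \<in> K" for t using that K(2) by auto
  have e0: "(\<Sum>u\<in>UNIV - {0}. chr g D u) = 0"
    by (rule sum_chr_zero[OF g _ _ v(2) _ v(3)]) (use v in auto)
  have eK: "(\<Sum>u\<in>K - {0}. chr g D u) = 0"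
    by (rule sum_chr_zero[OF g _ _ v(2) _ v(3)]) (use v sf in auto)
  have "UNIV - {0} = (UNIV - K) \<union> (K - {0})" using sf by auto
  hence "(\<Sum>u\<in>UNIV - {0}. chr g D u) = (\<Sum>u\<in>UNIV - K. chr g D u) + (\<Sum>u\<in>K - {0}. chr g D u)"
    by (simp add: sum.union_disjoint Diff_Int_distrib2)
  hence eU: "(\<Sum>u\<in>UNIV - K. chr g D u) = 0" using e0 eK by simp
  have "?S * cnj ?S = (\<Sum>s\<in>K. \<Sum>t\<in>K. chr g D (s - \<alpha>) * cnj (chr g D (t - \<alpha>)))"
    by (simp add: sum_product)
  also have "\<dots> = (\<Sum>p\<in>K \<times> K. chr g D ((fst p - \<alpha>) / (snd p - \<alpha>)))"
    unfolding sum.cartesian_product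
    using nz by (intro sum.cong refl) (auto simp: chr_cnj[OF g] chr_mult[OF g] divide_inverse)
  also have "K \<times> K = {p\<in>K \<times> K. fst p \<noteq> snd p} \<union> (\<lambda>t. (t, t)) ` K" by auto
  also have "(\<Sum>p\<in>{p\<in>K \<times> K. fst p \<noteq> snd p} \<union> (\<lambda>t. (t, t)) ` K. chr g D ((fst p - \<alpha>) / (snd p - \<alpha>)))
     = (\<Sum>p\<in>{p\<in>K \<times> K. fst p \<noteq> snd p}. chr g D ((fst p - \<alpha>) / (snd p - \<alpha>)))
       + (\<Sum>p\<in>(\<lambda>t. (t, t)) ` K. chr g D ((fst p - \<alpha>) / (snd p - \<alpha>)))"
    by (intro sum.union_disjoint) auto
  also have "(\<Sum>p\<in>{p\<in>K \<times> K. fst p \<noteq> snd p}. chr g D ((fst p - \<alpha>) / (snd p - \<alpha>))) = 0"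
    using sum_bij2[OF K, of "chr g D"] eU by simp
  also have "(\<Sum>p\<in>(\<lambda>t. (t, t)) ` K. chr g D ((fst p - \<alpha>) / (snd p - \<alpha>))) = of_nat q"
    using nz K by (simp add: sum.reindex inj_on_def chr_one[OF g])
  finally have "?S * cnj ?S = of_nat q" by simp
  moreover have "complex_of_real ((norm ?S)^2) = ?S * cnj ?S"
    by (rule complex_norm_square)
  ultimately have "complex_of_real ((norm ?S)^2) = complex_of_real (real q)"
    by simp
  hence "(norm ?S)^2 = real q" using of_real_eq_iff by blast
  thus ?thesis by (metis norm_ge_zero real_sqrt_unique)
qed


lemma fourier_cis: "fourier N r k = cis (2 * pi * real (r * k) / real N)"
  unfolding fourier_def cis_conv_exp by (simp add: field_simps)

lemma cinner_formula:
  fixes \<alpha> g :: "'a::{field,finite}"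
  assumes K: "is_subfield K" "\<alpha> \<notin> K" "card K = q" "card (UNIV::'a set) = q^2"
    and g: "primitive_root g"
    and N: "N = q^2 - 1" and M: "M = (\<lambda>t. dlog g (t - \<alpha>)) ` K"
    and Phi: "Phi = (\<lambda>k r. fourier N r k / complex_of_real (sqrt (real q + 1)))"
  shows "cinner (M \<union> {0}) (Phi k1) (Phi k2)
     = ((\<Sum>t\<in>K. chr g (int k1 - int k2) (t - \<alpha>)) + 1) / of_nat (q + 1)"
proof -
  note sf = subfield_facts[OF K(1)]
  have nz: "t - \<alpha> \<noteq> 0" if "t \<in> K" for t using that K(2) by auto
  let ?E = "\<lambda>r. cis (2 * pi * of_int (int r * (int k1 - int k2)) / real N)"
  have trm: "Phi k1 r * cnj (Phi k2 r) = ?E r / of_nat (q + 1)" for r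
  proof -
    have "Phi k1 r * cnj (Phi k2 r) = fourier N r k1 * cnj (fourier N r k2)
        / (complex_of_real (sqrt (real q + 1)) * complex_of_real (sqrt (real q + 1)))"
      by (simp add: Phi)
    also have "complex_of_real (sqrt (real q + 1)) * complex_of_real (sqrt (real q + 1)) = of_nat (q + 1)"
      by (simp flip: of_real_mult)
    also have "fourier N r k1 * cnj (fourier N r k2) = ?E r"
      unfolding fourier_cis cis_cnj cis_mult
      by (intro arg_cong[where f=cis]) (simp add: diff_divide_distrib algebra_simps)
    finally show ?thesis .
  qed
  have M0: "0 \<notin> M"
  proof
    assume "0 \<in> M"
    then obtain t where t: "t \<in> K" "dlog g (t - \<alpha>) = 0" using M by auto
    hence "t - \<alpha> = 1" using dlog_props(2)[OF g nz[OF t(1)]] by simp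
    hence "\<alpha> = t - 1" by (simp add: algebra_simps)
    thus False using t sf K(2) by metis
  qed
  have inj: "inj_on (\<lambda>t. dlog g (t - \<alpha>)) K"
  proof (rule inj_onI)
    fix s t assume "s \<in> K" "t \<in> K" "dlog g (s - \<alpha>) = dlog g (t - \<alpha>)"
    hence "g ^ dlog g (s - \<alpha>) = g ^ dlog g (t - \<alpha>)" by simp
    thus "s = t" using dlog_props(2)[OF g] nz \<open>s \<in> K\<close> \<open>t \<in> K\<close> by simp
  qed
  have NN: "N = card (UNIV::'a set) - 1" using N K by simp
  have "cinner (M \<union> {0}) (Phi k1) (Phi k2) = (\<Sum>r\<in>M \<union> {0}. ?E r) / of_nat (q + 1)"
    unfolding cinner_def trm by (simp add: sum_divide_distrib)
  also have "(\<Sum>r\<in>M \<union> {0}. ?E r) = (\<Sum>r\<in>M. ?E r) + 1"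
    using M0 M by (simp add: sum.insert)
  also have "(\<Sum>r\<in>M. ?E r) = (\<Sum>t\<in>K. ?E (dlog g (t - \<alpha>)))"
    unfolding M using inj by (simp add: sum.reindex)
  also have "\<dots> = (\<Sum>t\<in>K. chr g (int k1 - int k2) (t - \<alpha>))"
    unfolding chr_def NN ..
  finally show ?thesis .
qed


lemma cis_frac_eq1:
  assumes "cis (2 * pi * of_int a / of_int b) = 1" "b \<noteq> 0"
  shows "b dvd a"
proof -
  obtain n where "2 * pi * of_int a / of_int b = of_int n * (2 * pi)"
    using assms(1) cis_eq_1_iff by blast
  hence "real_of_int a = real_of_int (n * b)" using assms(2) by (simp add: field_simps)
  hence "a = n * b" by (simp only: of_int_eq_iff)
  thus ?thesis by simp
qed

lemma dlog_subfield_dvd: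
  fixes g :: "'a::{field,finite}"
  assumes K: "is_subfield K" "card K = q" "card (UNIV::'a set) = q^2"
    and g: "primitive_root g" and q: "q \<ge> 2" and c: "c \<in> K" "c \<noteq> 0"
  shows "(q + 1) dvd dlog g c"
proof -
  have "g ^ (dlog g c * (q - 1)) = c ^ (q - 1)"
    by (simp add: power_mult dlog_props(2)[OF g c(2)])
  also have "\<dots> = g ^ 0" using fermat_subfield[OF K(1) c] K by simp
  finally have "(dlog g c * (q - 1)) mod (card (UNIV::'a set) - 1) = 0 mod (card (UNIV::'a set) - 1)"
    using primroot_pow_eq[OF g refl] by blast
  hence "(q^2 - 1) dvd dlog g c * (q - 1)" using K by (simp add: mod_eq_0_iff_dvd)
  moreover have "q^2 - 1 = (q + 1) * (q - 1)" using q by (simp add: power2_eq_square algebra_simps)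
  ultimately have "(q - 1) * (q + 1) dvd (q - 1) * dlog g c" by (simp only: mult.commute)
  moreover have "0 < q - 1" using q by simp
  ultimately show ?thesis using nat_mult_dvd_cancel1 by blast
qed


lemma dvd_small_int:
  assumes "(b::int) dvd a" "\<bar>a\<bar> < b" shows "a = 0"
proof (rule ccontr)
  assume "a \<noteq> 0"
  hence "\<bar>b\<bar> \<le> \<bar>a\<bar>" using assms(1) dvd_imp_le_int by blast
  thus False using assms(2) by linarith
qed

theorem theorem3p3:
  fixes q :: nat and K :: "'a::{field,finite} set" and \<alpha> g :: 'a
    and N :: nat and M :: "nat set" and Phi :: "nat \<Rightarrow> nat \<Rightarrow> complex" and T :: "nat \<Rightarrow> nat set"
  assumes "\<exists>p k. prime p \<and> k > 0 \<and> q = p ^ k"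
    and "card (UNIV :: 'a set) = q ^ 2"
    and "is_subfield K" and "card K = q"
    and "adjoin K \<alpha> = UNIV"
    and "primitive_root g"
  defines "N \<equiv> q ^ 2 - 1"
    and "M \<equiv> (\<lambda>t. dlog g (t - \<alpha>)) ` K"
    and "Phi \<equiv> (\<lambda>k r. fourier N r k / complex_of_real (sqrt (real q + 1)))"
    and "T \<equiv> (\<lambda>j. {j + i * (q - 1) | i. i \<le> q})"
  shows "(\<forall>j \<le> q - 2. \<forall>k1 \<in> T j. \<forall>k2 \<in> T j.
            cinner (M \<union> {0}) (Phi k1) (Phi k2) = (if k1 = k2 then 1 else 0))
       \<and> (\<forall>j1 j2 k1 k2. j1 \<le> q - 2 \<and> j2 \<le> q - 2 \<and> j1 \<noteq> j2 \<and> k1 \<in> T j1 \<and> k2 \<in> T j2 \<longrightarrow>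
            (sqrt q - 1) / (q + 1) \<le> cmod (cinner (M \<union> {0}) (Phi k1) (Phi k2))
            \<and> cmod (cinner (M \<union> {0}) (Phi k1) (Phi k2)) \<le> (sqrt q + 1) / (q + 1))"
proof -
  note sf = subfield_facts[OF assms(3)]
  note g = assms(6)
  have q2: "q \<ge> 2"
  proof -
    obtain p k where pk: "prime p" "k > 0" "q = p ^ k" using assms(1) by blast
    have "p \<ge> 2" using pk(1) prime_ge_2_nat by blast
    hence "p ^ 1 \<le> p ^ k" using pk(2) by (intro power_increasing) auto
    thus ?thesis using pk \<open>p \<ge> 2\<close> by simp
  qed
  have aK: "\<alpha> \<notin> K"
  proof
    assume "\<alpha> \<in> K"
    hence "adjoin K \<alpha> \<subseteq> K" unfolding adjoin_def using assms(3) by blast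
    hence "K = UNIV" using assms(5) by auto
    hence "q^2 = q" using assms(2,4) by simp
    thus False using q2 by (simp add: power2_eq_square)
  qed
  have K: "is_subfield K" "\<alpha> \<notin> K" "card K = q" "card (UNIV::'a set) = q^2"
    using assms aK by auto
  have NN: "N = card (UNIV::'a set) - 1" using assms(2) N_def by simp
  have Nfac: "N = (q + 1) * (q - 1)" using q2 unfolding N_def by (simp add: power2_eq_square algebra_simps)
  have CF: "cinner (M \<union> {0}) (Phi k1) (Phi k2)
     = ((\<Sum>t\<in>K. chr g (int k1 - int k2) (t - \<alpha>)) + 1) / of_nat (q + 1)" for k1 k2
    by (rule cinner_formula[OF K g N_def[THEN meta_eq_to_obj_eq] M_def[THEN meta_eq_to_obj_eq] Phi_def[THEN meta_eq_to_obj_eq]])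
  have chrdef: "chr g D u = cis (2 * pi * of_int (int (dlog g u) * D) / of_int (int N))" for D u
    unfolding chr_def NN by simp
  have dlg: "dlog g g = 1"
  proof -
    have "(q + 1) * (q - 1) \<ge> 3 * 1" using q2 by (intro mult_le_mono) auto
    hence "N \<ge> 3" using Nfac by simp
    thus ?thesis using dlog_pow[OF g, of 1] NN by simp
  qed
  show ?thesis
  proof (rule conjI; intro allI impI ballI)
    fix j k1 k2 assume j: "j \<le> q - 2" and k1: "k1 \<in> T j" and k2: "k2 \<in> T j"
    obtain i1 where i1: "k1 = j + i1 * (q - 1)" "i1 \<le> q" using k1 unfolding T_def by auto
    obtain i2 where i2: "k2 = j + i2 * (q - 1)" "i2 \<le> q" using k2 unfolding T_def by auto
    define D where "D = int k1 - int k2"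
    have D: "D = (int i1 - int i2) * int (q - 1)" unfolding D_def i1(1) i2(1) of_nat_add of_nat_mult by (simp add: algebra_simps)
    show "cinner (M \<union> {0}) (Phi k1) (Phi k2) = (if k1 = k2 then 1 else 0)"
    proof (cases "i1 = i2")
      case True
      hence "k1 = k2" using i1 i2 by simp
      moreover have "1 + complex_of_nat q \<noteq> 0"
        by (metis of_nat_Suc of_nat_eq_0_iff Suc_neq_Zero add.commute)
      ultimately show ?thesis unfolding CF using K by (simp add: chr_def)
    next
      case False
      hence ne: "k1 \<noteq> k2" using i1 i2 q2 by auto
      have triv: "chr g D c = 1" if c: "c \<in> K" "c \<noteq> 0" for c
      proof -
        obtain m where m: "dlog g c = (q + 1) * m"
          using dlog_subfield_dvd[OF K(1,3,4) g q2 c] by blast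
        have eq: "int (dlog g c) * D = int m * (int i1 - int i2) * int N"
          unfolding m D Nfac using q2 by (cases q) (auto simp: algebra_simps)
        have "N > 0" using Nfac q2 by simp
        hence "of_int (int (dlog g c) * D) / of_int (int N) = real_of_int (int m * (int i1 - int i2))"
          unfolding eq by simp
        hence "2 * pi * of_int (int (dlog g c) * D) / of_int (int N) = 2 * pi * real_of_int (int m * (int i1 - int i2))"
          by (simp only: times_divide_eq_right[symmetric])
        thus ?thesis unfolding chrdef by (simp only:) (rule cis_multiple_2pi, simp)
      qed
      have vg: "chr g D g \<noteq> 1"
      proof
        assume "chr g D g = 1"
        moreover obtain r where r: "q - 1 = r" "r > 0" using q2 by auto
        moreover have "2 * pi * of_int (int (dlog g g) * D) / of_int (int N)
             = 2 * pi * of_int (int i1 - int i2) / of_int (int (q + 1))"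
        proof -
          have nz: "real r + real q * real r \<noteq> 0" using r(2)
            by (metis add_pos_nonneg of_nat_0_less_iff of_nat_0_le_iff mult_nonneg_nonneg less_irrefl)
          show ?thesis unfolding dlg D Nfac r(1) using r(2) nz by (simp add: field_simps)
        qed
        ultimately have "cis (2 * pi * of_int (int i1 - int i2) / of_int (int (q + 1))) = 1"
          unfolding chrdef by simp
        hence "int (q + 1) dvd int i1 - int i2" by (rule cis_frac_eq1) simp
        moreover have "\<bar>int i1 - int i2\<bar> < int (q + 1)" using i1(2) i2(2) by linarith
        ultimately have "int i1 - int i2 = 0" by (rule dvd_small_int)
        thus False using False by simp
      qed
      have "(\<Sum>t\<in>K. chr g D (t - \<alpha>)) = -1"
        by (rule S_trivial[OF K g q2 triv _ vg]) (use g in \<open>auto simp: primitive_root_def\<close>)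
      thus ?thesis unfolding CF using ne by (simp add: D_def)
    qed
  next
    fix j1 j2 k1 k2 assume h: "j1 \<le> q - 2 \<and> j2 \<le> q - 2 \<and> j1 \<noteq> j2 \<and> k1 \<in> T j1 \<and> k2 \<in> T j2"
    show "(sqrt q - 1) / (q + 1) \<le> cmod (cinner (M \<union> {0}) (Phi k1) (Phi k2))
            \<and> cmod (cinner (M \<union> {0}) (Phi k1) (Phi k2)) \<le> (sqrt q + 1) / (q + 1)"
    proof -
      have q3: "q \<ge> 3" using h by auto
      obtain i1 where i1: "k1 = j1 + i1 * (q - 1)" "i1 \<le> q" using h unfolding T_def by auto
      obtain i2 where i2: "k2 = j2 + i2 * (q - 1)" "i2 \<le> q" using h unfolding T_def by auto
      define D where "D = int k1 - int k2"
      have D: "D = (int j1 - int j2) + (int i1 - int i2) * int (q - 1)"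
        unfolding D_def i1(1) i2(1) of_nat_add of_nat_mult by (simp add: algebra_simps)
      let ?A = "K - {0}"
      let ?B = "(\<lambda>i. (q + 1) * i) ` {..<q - 1}"
      have sub: "dlog g ` ?A \<subseteq> ?B"
      proof
        fix x assume "x \<in> dlog g ` ?A"
        then obtain c where c: "c \<in> K" "c \<noteq> 0" "x = dlog g c" by auto
        obtain m where m: "dlog g c = (q + 1) * m"
          using dlog_subfield_dvd[OF K(1,3,4) g q2 c(1,2)] by blast
        have "(q + 1) * m < (q + 1) * (q - 1)" using dlog_props(1)[OF g c(2)] m NN Nfac by simp
        hence "m < q - 1" by (rule mult_left_less_imp_less) simp
        thus "x \<in> ?B" using c m by auto
      qed
      have injd: "inj_on (dlog g) ?A"
        using dlog_props(2)[OF g] by (metis (no_types, lifting) DiffD2 inj_onI singletonI)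
      have "card (dlog g ` ?A) = q - 1" using injd K sf by (simp add: card_image card_Diff_singleton)
      moreover have "card ?B = q - 1" by (subst card_image) (auto simp: inj_on_def simp del: mult_Suc mult_Suc_right add_mult_distrib add_mult_distrib2 distrib_right distrib_left)
      ultimately have "dlog g ` ?A = ?B" using sub by (intro card_subset_eq) auto
      moreover have "q + 1 \<in> ?B" using q3 by (intro image_eqI[of _ _ 1]) auto
      ultimately obtain v where v: "v \<in> K" "v \<noteq> 0" "dlog g v = q + 1" by force
      have cv: "chr g D v \<noteq> 1"
      proof
        assume "chr g D v = 1"
        moreover obtain r where r: "q - 1 = r" "r > 0" using q2 by auto
        moreover have "2 * pi * of_int (int (dlog g v) * D) / of_int (int N)
             = 2 * pi * of_int D / of_int (int (q - 1))"
        proof -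
          have nz: "real r + real q * real r \<noteq> 0" using r(2)
            by (metis add_pos_nonneg of_nat_0_less_iff of_nat_0_le_iff mult_nonneg_nonneg less_irrefl)
          show ?thesis unfolding v Nfac r(1) using r(2) nz by (simp add: field_simps)
        qed
        ultimately have "cis (2 * pi * of_int D / of_int (int (q - 1))) = 1"
          unfolding chrdef by simp
        hence "int (q - 1) dvd D" by (rule cis_frac_eq1) (use q2 in simp)
        hence "int (q - 1) dvd int j1 - int j2" unfolding D by (simp add: dvd_add_left_iff)
        moreover have "\<bar>int j1 - int j2\<bar> < int (q - 1)" "int j1 - int j2 \<noteq> 0" using h q3 by auto
        ultimately show False using dvd_small_int by blast
      qed
      have nS: "norm (\<Sum>t\<in>K. chr g D (t - \<alpha>)) = sqrt q"
        by (rule S_nontrivial[OF K g v(1,2) cv])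
      define S where "S = (\<Sum>t\<in>K. chr g D (t - \<alpha>))"
      have cm: "cmod (cinner (M \<union> {0}) (Phi k1) (Phi k2)) = norm (S + 1) / (q + 1)"
      proof -
        have "cmod (1 + complex_of_nat q) = 1 + real q"
          by (simp only: of_nat_Suc[symmetric] norm_of_nat)
        thus ?thesis unfolding CF S_def D_def by (simp add: norm_divide)
      qed
      have "norm S \<le> norm (S + 1) + 1" using norm_triangle_ineq[of "S + 1" "-1"] by simp
      moreover have "norm (S + 1) \<le> norm S + 1" using norm_triangle_ineq[of S 1] by simp
      ultimately show ?thesis unfolding cm using nS[folded S_def]
        by (auto simp: divide_right_mono)
    qed
  qed
qed

end
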